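(* Let $A=(A,\oplus,\odot)$ be a skew brace, $D$ a cyclic characteristic subgroup of $A_{\oplus}$, and $B=C_{A_{\oplus}}(D)$ the centralizer of $D$ in $A_{\oplus}$. For $x\in A$ denote by $\overline{x}$ the image of $x$ under the natural homomorphism $A_{\oplus}\to A_{\oplus}/B$. Then there exists a positive integer $m$ such that for all $a,b\in A_{\odot}^{(m)}$ the equalities $\overline{a\odot b}=\overline{a\oplus b}$ and $\overline{a^{-1}}=\overline{\ominus a}$ hold.
   Context: A skew brace is a set $A$ with two binary operations $\oplus,\odot$ such that $A_{\oplus}=(A,\oplus)$ and $A_{\odot}=(A,\odot)$ are groups and $a\odot(b\oplus c)=(a\odot b)\ominus a\oplus(a\odot c)$ for all $a,b,c\in A$, where $\ominus a$ is the inverse of $a$ in $A_{\oplus}$ and $a^{-1}$ is the inverse of $a$ in $A_{\odot}$. The derived series of a group $G$ is indexed by $G^{(1)}=G$, $G^{(i+1)}=[G^{(i)},G^{(i)}]$. The subgroup $D$ may be finite or infinite cyclic. *)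

theory Defs
  imports "HOL-Algebra.Algebra"
begin

text \<open>A skew brace: two group structures G (additive, A_plus) and M (multiplicative, A_odot)
  on the same carrier satisfying a(b+c) = ab - a + ac.\<close>
definition skew_brace :: "('a, 'b) monoid_scheme \<Rightarrow> ('a, 'c) monoid_scheme \<Rightarrow> bool" where
  "skew_brace G M \<longleftrightarrow> group G \<and> group M \<and> carrier M = carrier G \<and>
     (\<forall>a\<in>carrier G. \<forall>b\<in>carrier G. \<forall>c\<in>carrier G.
        a \<otimes>\<^bsub>M\<^esub> (b \<otimes>\<^bsub>G\<^esub> c)
        = (a \<otimes>\<^bsub>M\<^esub> b) \<otimes>\<^bsub>G\<^esub> inv\<^bsub>G\<^esub> a \<otimes>\<^bsub>G\<^esub> (a \<otimes>\<^bsub>M\<^esub> c))"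

definition characteristic_subgroup :: "'a set \<Rightarrow> ('a, 'b) monoid_scheme \<Rightarrow> bool" where
  "characteristic_subgroup H G \<longleftrightarrow> subgroup H G \<and> (\<forall>f \<in> iso G G. f ` H = H)"

definition centralizer :: "('a, 'b) monoid_scheme \<Rightarrow> 'a set \<Rightarrow> 'a set" where
  "centralizer G H = {x \<in> carrier G. \<forall>h\<in>H. x \<otimes>\<^bsub>G\<^esub> h = h \<otimes>\<^bsub>G\<^esub> x}"

text \<open>Derived series indexed from 1: G^(1) = G, G^(i+1) = [G^(i), G^(i)].\<close>
definition derived_term :: "('a, 'b) monoid_scheme \<Rightarrow> nat \<Rightarrow> 'a set" where
  "derived_term G i = (derived G ^^ (i - 1)) (carrier G)"

end

theory Submission imports Defs begin

lemma (in group) gcanc1[simp]: "x \<in> carrier G \<Longrightarrow> y \<in> carrier G \<Longrightarrow> inv x \<otimes> (x \<otimes> y) = y"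
  by (simp add: m_assoc[symmetric])
lemma (in group) gcanc2[simp]: "x \<in> carrier G \<Longrightarrow> y \<in> carrier G \<Longrightarrow> x \<otimes> (inv x \<otimes> y) = y"
  by (simp add: m_assoc[symmetric])

locale sbr = G: group G + M: group M
  for G :: "('a,'b) monoid_scheme" and M :: "('a,'c) monoid_scheme" +
  assumes carrM: "carrier M = carrier G"
  and distr: "\<And>a b c. a\<in>carrier G \<Longrightarrow> b\<in>carrier G \<Longrightarrow> c\<in>carrier G \<Longrightarrow>
        a \<otimes>\<^bsub>M\<^esub> (b \<otimes>\<^bsub>G\<^esub> c)
        = (a \<otimes>\<^bsub>M\<^esub> b) \<otimes>\<^bsub>G\<^esub> inv\<^bsub>G\<^esub> a \<otimes>\<^bsub>G\<^esub> (a \<otimes>\<^bsub>M\<^esub> c)"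
begin

definition lam where "lam a b = inv\<^bsub>G\<^esub> a \<otimes>\<^bsub>G\<^esub> (a \<otimes>\<^bsub>M\<^esub> b)"

lemma mclosed[simp]: "a\<in>carrier G \<Longrightarrow> b\<in>carrier G \<Longrightarrow> a \<otimes>\<^bsub>M\<^esub> b \<in> carrier G"
  using M.m_closed carrM by auto

lemma minv_closed[simp]: "a\<in>carrier G \<Longrightarrow> inv\<^bsub>M\<^esub> a \<in> carrier G"
  using M.inv_closed carrM by auto

lemma lam_closed[simp]: "a\<in>carrier G \<Longrightarrow> b\<in>carrier G \<Longrightarrow> lam a b \<in> carrier G"
  by (simp add: lam_def)

lemma Gc1[simp]: "x \<in> carrier G \<Longrightarrow> y \<in> carrier G \<Longrightarrow> inv\<^bsub>G\<^esub> x \<otimes>\<^bsub>G\<^esub> (x \<otimes>\<^bsub>G\<^esub> y) = y"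
  by (simp add: G.m_assoc[symmetric])
lemma Gc2[simp]: "x \<in> carrier G \<Longrightarrow> y \<in> carrier G \<Longrightarrow> x \<otimes>\<^bsub>G\<^esub> (inv\<^bsub>G\<^esub> x \<otimes>\<^bsub>G\<^esub> y) = y"
  by (simp add: G.m_assoc[symmetric])

lemma one_eq: "\<one>\<^bsub>M\<^esub> = \<one>\<^bsub>G\<^esub>"
proof -
  define y where "y = \<one>\<^bsub>G\<^esub> \<otimes>\<^bsub>M\<^esub> \<one>\<^bsub>G\<^esub>"
  have yc: "y \<in> carrier G" by (simp add: y_def)
  have "y = y \<otimes>\<^bsub>G\<^esub> y"
    using distr[of "\<one>\<^bsub>G\<^esub>" "\<one>\<^bsub>G\<^esub>" "\<one>\<^bsub>G\<^esub>"] by (simp add: y_def)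
  hence "y = \<one>\<^bsub>G\<^esub>" using yc
    by (metis G.l_one G.one_closed G.r_cancel)
  hence "\<one>\<^bsub>G\<^esub> \<otimes>\<^bsub>M\<^esub> \<one>\<^bsub>G\<^esub> = \<one>\<^bsub>G\<^esub> \<otimes>\<^bsub>M\<^esub> \<one>\<^bsub>M\<^esub>"
    using carrM by (simp add: y_def)
  thus ?thesis using carrM
    by (metis G.one_closed M.l_cancel M.one_closed)
qed

lemma mult_decomp: "a\<in>carrier G \<Longrightarrow> b\<in>carrier G \<Longrightarrow> a \<otimes>\<^bsub>M\<^esub> b = a \<otimes>\<^bsub>G\<^esub> lam a b"
  by (simp add: lam_def G.m_assoc[symmetric])

lemma lam_mult: "a\<in>carrier G \<Longrightarrow> b\<in>carrier G \<Longrightarrow> c\<in>carrier G \<Longrightarrow>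
   lam a (b \<otimes>\<^bsub>G\<^esub> c) = lam a b \<otimes>\<^bsub>G\<^esub> lam a c"
  by (simp add: lam_def distr G.m_assoc)

lemma lam_one: "c\<in>carrier G \<Longrightarrow> lam \<one>\<^bsub>G\<^esub> c = c"
  using carrM by (simp add: lam_def one_eq[symmetric] M.r_one) (simp add: one_eq)

lemma lam_hom: "a\<in>carrier G \<Longrightarrow> lam a \<in> hom G G"
  by (rule homI) (auto simp: lam_mult)

lemma lam_bij: "a\<in>carrier G \<Longrightarrow> bij_betw (lam a) (carrier G) (carrier G)"
proof (rule bij_betwI')
  fix x y assume "a\<in>carrier G" "x\<in>carrier G" "y\<in>carrier G"
  then show "(lam a x = lam a y) = (x = y)"
    using carrM by (auto simp: lam_def)
next
  fix x assume "a\<in>carrier G" "x\<in>carrier G" thus "lam a x \<in> carrier G" by simp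
next
  fix y assume a: "a\<in>carrier G" "y\<in>carrier G"
  define x where "x = inv\<^bsub>M\<^esub> a \<otimes>\<^bsub>M\<^esub> (a \<otimes>\<^bsub>G\<^esub> y)"
  have "a \<otimes>\<^bsub>M\<^esub> x = a \<otimes>\<^bsub>G\<^esub> y" using a carrM
    by (simp add: x_def M.m_assoc[symmetric])
  hence "lam a x = y" using a by (simp add: lam_def G.m_assoc[symmetric])
  moreover have "x \<in> carrier G" using a by (simp add: x_def)
  ultimately show "\<exists>x\<in>carrier G. y = lam a x" by auto
qed

lemma lam_iso: "a\<in>carrier G \<Longrightarrow> lam a \<in> iso G G"
  by (simp add: iso_def lam_hom lam_bij)

lemma minv_G: assumes a: "a\<in>carrier G" and b: "b\<in>carrier G"
  shows "a \<otimes>\<^bsub>M\<^esub> inv\<^bsub>G\<^esub> b = a \<otimes>\<^bsub>G\<^esub> inv\<^bsub>G\<^esub> (a \<otimes>\<^bsub>M\<^esub> b) \<otimes>\<^bsub>G\<^esub> a"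
proof -
  have "a = a \<otimes>\<^bsub>M\<^esub> (b \<otimes>\<^bsub>G\<^esub> inv\<^bsub>G\<^esub> b)" using a b carrM
    by (simp add: flip: one_eq)
  also have "\<dots> = (a \<otimes>\<^bsub>M\<^esub> b) \<otimes>\<^bsub>G\<^esub> inv\<^bsub>G\<^esub> a \<otimes>\<^bsub>G\<^esub> (a \<otimes>\<^bsub>M\<^esub> inv\<^bsub>G\<^esub> b)"
    using a b by (intro distr) simp_all
  finally have e: "a = (a \<otimes>\<^bsub>M\<^esub> b) \<otimes>\<^bsub>G\<^esub> inv\<^bsub>G\<^esub> a \<otimes>\<^bsub>G\<^esub> (a \<otimes>\<^bsub>M\<^esub> inv\<^bsub>G\<^esub> b)" .
  have "a \<otimes>\<^bsub>M\<^esub> inv\<^bsub>G\<^esub> b = inv\<^bsub>G\<^esub> ((a \<otimes>\<^bsub>M\<^esub> b) \<otimes>\<^bsub>G\<^esub> inv\<^bsub>G\<^esub> a) \<otimes>\<^bsub>G\<^esub> a"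
    using a b e by (subst G.inv_solve_left) simp_all
  also have "\<dots> = a \<otimes>\<^bsub>G\<^esub> inv\<^bsub>G\<^esub> (a \<otimes>\<^bsub>M\<^esub> b) \<otimes>\<^bsub>G\<^esub> a"
    using a b by (simp add: G.inv_mult_group)
  finally show ?thesis .
qed

lemma lam_comp: assumes a: "a\<in>carrier G" and b: "b\<in>carrier G" and c: "c\<in>carrier G"
  shows "lam a (lam b c) = lam (a \<otimes>\<^bsub>M\<^esub> b) c"
proof -
  define pp where "pp = a \<otimes>\<^bsub>M\<^esub> b"
  define xx where "xx = pp \<otimes>\<^bsub>M\<^esub> c"
  have pp: "pp \<in> carrier G" and xx: "xx \<in> carrier G" using a b c by (simp_all add: pp_def xx_def)
  have xx2: "a \<otimes>\<^bsub>M\<^esub> (b \<otimes>\<^bsub>M\<^esub> c) = xx" using a b c carrM by (simp add: xx_def pp_def M.m_assoc)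
  have "lam a (lam b c) = inv\<^bsub>G\<^esub> a \<otimes>\<^bsub>G\<^esub> ((a \<otimes>\<^bsub>M\<^esub> inv\<^bsub>G\<^esub> b) \<otimes>\<^bsub>G\<^esub> inv\<^bsub>G\<^esub> a \<otimes>\<^bsub>G\<^esub> (a \<otimes>\<^bsub>M\<^esub> (b \<otimes>\<^bsub>M\<^esub> c)))"
    using a b c by (simp add: lam_def distr)
  also have "\<dots> = inv\<^bsub>G\<^esub> a \<otimes>\<^bsub>G\<^esub> (a \<otimes>\<^bsub>G\<^esub> inv\<^bsub>G\<^esub> pp \<otimes>\<^bsub>G\<^esub> a \<otimes>\<^bsub>G\<^esub> inv\<^bsub>G\<^esub> a \<otimes>\<^bsub>G\<^esub> xx)"
    using a b by (simp add: minv_G xx2 pp_def)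
  also have "\<dots> = inv\<^bsub>G\<^esub> pp \<otimes>\<^bsub>G\<^esub> xx"
    using a pp xx by (simp add: G.m_assoc)
  finally show ?thesis by (simp add: lam_def xx_def pp_def)
qed



lemma lam_D: assumes "characteristic_subgroup D G" "a \<in> carrier G" "d \<in> D"
  shows "lam a d \<in> D"
  using assms lam_iso unfolding characteristic_subgroup_def by blast

end

lemma (in group) conj_iso: assumes g: "g \<in> carrier G"
  shows "(\<lambda>x. g \<otimes> x \<otimes> inv g) \<in> iso G G"
proof -
  have "(\<lambda>x. g \<otimes> x \<otimes> inv g) \<in> hom G G"
    by (rule homI) (use g in \<open>simp_all add: m_assoc\<close>)
  moreover have "bij_betw (\<lambda>x. g \<otimes> x \<otimes> inv g) (carrier G) (carrier G)"
  proof (rule bij_betwI')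
    fix x y assume "x \<in> carrier G" "y \<in> carrier G"
    thus "(g \<otimes> x \<otimes> inv g = g \<otimes> y \<otimes> inv g) = (x = y)" using g
      by (metis inv_closed l_cancel m_closed r_cancel)
  next
    fix x assume "x \<in> carrier G" thus "g \<otimes> x \<otimes> inv g \<in> carrier G" using g by simp
  next
    fix y assume y: "y \<in> carrier G"
    have "g \<otimes> (inv g \<otimes> y \<otimes> g) \<otimes> inv g = y" using g y by (simp add: m_assoc)
    thus "\<exists>x\<in>carrier G. y = g \<otimes> x \<otimes> inv g" using g y by (metis inv_closed m_closed)
  qed
  ultimately show ?thesis by (simp add: iso_def)
qed

lemma (in group) char_conj: assumes "characteristic_subgroup D G" "g \<in> carrier G" "d \<in> D"
  shows "g \<otimes> d \<otimes> inv g \<in> D"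
  using assms conj_iso unfolding characteristic_subgroup_def by blast

lemma centralizerI: "x \<in> carrier G \<Longrightarrow> (\<And>h. h\<in>D \<Longrightarrow> x \<otimes>\<^bsub>G\<^esub> h = h \<otimes>\<^bsub>G\<^esub> x) \<Longrightarrow> x \<in> centralizer G D"
  unfolding centralizer_def by auto
lemma centralizerD: "x \<in> centralizer G D \<Longrightarrow> x \<in> carrier G"
  "x \<in> centralizer G D \<Longrightarrow> h\<in>D \<Longrightarrow> x \<otimes>\<^bsub>G\<^esub> h = h \<otimes>\<^bsub>G\<^esub> x"
  unfolding centralizer_def by auto

lemma (in group) centralizer_normal: assumes "characteristic_subgroup D G"
  shows "centralizer G D \<lhd> G"
proof -
  have sD: "subgroup D G" using assms by (simp add: characteristic_subgroup_def)
  have Dc: "\<And>d. d \<in> D \<Longrightarrow> d \<in> carrier G" by (rule subgroup.mem_carrier[OF sD])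
  have sub: "subgroup (centralizer G D) G"
  proof (rule subgroupI)
    show "centralizer G D \<subseteq> carrier G" by (auto simp: centralizer_def)
    have "\<one> \<in> centralizer G D" using Dc by (intro centralizerI) simp_all
    thus "centralizer G D \<noteq> {}" by blast
  next
    fix a assume a: "a \<in> centralizer G D"
    show "inv a \<in> centralizer G D" 
    proof (rule centralizerI)
      show "inv a \<in> carrier G" using centralizerD(1)[OF a] by simp
    next
      fix h assume h: "h \<in> D"
      have ac: "a \<in> carrier G" and ah: "a \<otimes> h = h \<otimes> a" using centralizerD(1)[OF a] centralizerD(2)[OF a h] by auto
      have hc: "h \<in> carrier G" using Dc[OF h] .
      have "inv a \<otimes> h = inv a \<otimes> (h \<otimes> a) \<otimes> inv a" using ac hc by (simp add: m_assoc)
      also have "\<dots> = inv a \<otimes> (a \<otimes> h) \<otimes> inv a" using ah by simp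
      also have "\<dots> = h \<otimes> inv a" using ac hc by simp
      finally show "inv a \<otimes> h = h \<otimes> inv a" .
    qed
  next
    fix a b assume a: "a \<in> centralizer G D" and b: "b \<in> centralizer G D"
    show "a \<otimes> b \<in> centralizer G D" 
    proof (rule centralizerI)
      show "a \<otimes> b \<in> carrier G" using centralizerD(1)[OF a] centralizerD(1)[OF b] by simp
    next
      fix h assume h: "h \<in> D"
      have ac: "a \<in> carrier G" and ah: "a \<otimes> h = h \<otimes> a" using centralizerD(1)[OF a] centralizerD(2)[OF a h] by auto
      have bc: "b \<in> carrier G" and bh: "b \<otimes> h = h \<otimes> b" using centralizerD(1)[OF b] centralizerD(2)[OF b h] by auto
      have hc: "h \<in> carrier G" using Dc[OF h] .
      have "a \<otimes> b \<otimes> h = a \<otimes> (b \<otimes> h)" using ac bc hc by (simp add: m_assoc)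
      also have "\<dots> = (a \<otimes> h) \<otimes> b" using ac bc hc bh by (simp add: m_assoc)
      also have "\<dots> = h \<otimes> (a \<otimes> b)" using ac bc hc ah by (simp add: m_assoc)
      finally show "a \<otimes> b \<otimes> h = h \<otimes> (a \<otimes> b)" .
    qed
  qed
  show ?thesis unfolding normal_inv_iff
  proof (intro conjI sub ballI)
    fix x h assume x: "x \<in> carrier G" and h: "h \<in> centralizer G D"
    have hc: "h \<in> carrier G" using centralizerD(1)[OF h] by simp
    show "x \<otimes> h \<otimes> inv x \<in> centralizer G D" 
    proof (rule centralizerI)
      show "x \<otimes> h \<otimes> inv x \<in> carrier G" using x hc by simp
    next
      fix d assume d: "d \<in> D"
      have e: "inv x \<otimes> d \<otimes> x \<in> D" using char_conj[OF assms _ d, of "inv x"] x by simp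
      hence e': "h \<otimes> (inv x \<otimes> d \<otimes> x) = (inv x \<otimes> d \<otimes> x) \<otimes> h" using h x centralizerD(2)[OF h] by simp
      note dc = Dc[OF d]
      have "x \<otimes> h \<otimes> inv x \<otimes> d = x \<otimes> (h \<otimes> (inv x \<otimes> d \<otimes> x)) \<otimes> inv x"
        using x hc dc by (simp add: m_assoc)
      also have "\<dots> = x \<otimes> ((inv x \<otimes> d \<otimes> x) \<otimes> h) \<otimes> inv x" using e' by simp
      also have "\<dots> = d \<otimes> (x \<otimes> h \<otimes> inv x)" using x hc dc by (simp add: m_assoc)
      finally show "x \<otimes> h \<otimes> inv x \<otimes> d = d \<otimes> (x \<otimes> h \<otimes> inv x)" .
    qed
  qed
qed


locale sbrD = sbr +
  fixes D :: "'a set"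
  assumes char: "characteristic_subgroup D G"
    and cyc: "cyclic_group (subgroup_generated G D)"
begin

lemma sD: "subgroup D G" using char by (simp add: characteristic_subgroup_def)

lemma Dc: "d \<in> D \<Longrightarrow> d \<in> carrier G" by (rule subgroup.mem_carrier[OF sD])

lemma gen: "\<exists>x\<in>D. D = range (\<lambda>n::int. x [^]\<^bsub>G\<^esub> n)"
proof -
  have gSG: "group (subgroup_generated G D)" by (rule G.group_subgroup_generated)
  obtain x where x: "x \<in> carrier (subgroup_generated G D)"
    and eq: "carrier (subgroup_generated G D) = range (\<lambda>n::int. x [^]\<^bsub>subgroup_generated G D\<^esub> n)"
    using cyc group.cyclic_group[OF gSG] by blast
  have c: "carrier (subgroup_generated G D) = D"
    by (rule subgroup.carrier_subgroup_generated_subgroup[OF sD])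
  have pw: "\<And>n::int. x [^]\<^bsub>subgroup_generated G D\<^esub> n = x [^]\<^bsub>G\<^esub> n"
    using G.int_pow_subgroup_generated[OF x] .
  have "D = range (\<lambda>n::int. x [^]\<^bsub>G\<^esub> n)" using eq c by (simp add: pw)
  moreover have "x \<in> D" using x c by simp
  ultimately show ?thesis by blast
qed

lemma lam_commD: assumes a: "a \<in> carrier G" and b: "b \<in> carrier G" and d: "d \<in> D"
  shows "lam a (lam b d) = lam b (lam a d)"
proof -
  obtain x where xD: "x \<in> D" and eq: "D = range (\<lambda>n::int. x [^]\<^bsub>G\<^esub> n)" using gen by blast
  have xc: "x \<in> carrier G" using Dc[OF xD] .
  have "lam a x \<in> range (\<lambda>n::int. x [^]\<^bsub>G\<^esub> n)" using lam_D[OF char a xD] eq by simp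
  then obtain k1 where k1: "lam a x = x [^]\<^bsub>G\<^esub> (k1::int)" by blast
  have "lam b x \<in> range (\<lambda>n::int. x [^]\<^bsub>G\<^esub> n)" using lam_D[OF char b xD] eq by simp
  then obtain k2 where k2: "lam b x = x [^]\<^bsub>G\<^esub> (k2::int)" by blast
  have "d \<in> range (\<lambda>n::int. x [^]\<^bsub>G\<^esub> n)" using d eq by simp
  then obtain n where n: "d = x [^]\<^bsub>G\<^esub> (n::int)" by blast
  have ha: "\<And>y (m::int). y \<in> carrier G \<Longrightarrow> lam a (y [^]\<^bsub>G\<^esub> m) = lam a y [^]\<^bsub>G\<^esub> m"
    using hom_int_pow[OF lam_hom[OF a] _ G.is_group G.is_group] by blast
  have hb: "\<And>y (m::int). y \<in> carrier G \<Longrightarrow> lam b (y [^]\<^bsub>G\<^esub> m) = lam b y [^]\<^bsub>G\<^esub> m"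
    using hom_int_pow[OF lam_hom[OF b] _ G.is_group G.is_group] by blast
  have "lam a (lam b d) = x [^]\<^bsub>G\<^esub> (k1 * (k2 * n))"
    using xc by (simp add: n ha hb k1 k2 G.int_pow_pow)
  moreover have "lam b (lam a d) = x [^]\<^bsub>G\<^esub> (k2 * (k1 * n))"
    using xc by (simp add: n ha hb k1 k2 G.int_pow_pow)
  ultimately show ?thesis by (simp add: algebra_simps)
qed

definition K where "K = {a \<in> carrier G. \<forall>d\<in>D. lam a d = d}"

lemma K_sub: "subgroup K M"
proof (rule M.subgroupI)
  show "K \<subseteq> carrier M" using carrM by (auto simp: K_def)
  have "\<one>\<^bsub>M\<^esub> \<in> K" using Dc by (auto simp: K_def one_eq lam_one)
  thus "K \<noteq> {}" by blast
next
  fix a assume a: "a \<in> K"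
  have ac: "a \<in> carrier G" using a by (simp add: K_def)
  have "lam (inv\<^bsub>M\<^esub> a) d = d" if d: "d \<in> D" for d
  proof -
    have "lam (inv\<^bsub>M\<^esub> a) d = lam (inv\<^bsub>M\<^esub> a) (lam a d)" using a d by (simp add: K_def)
    also have "\<dots> = lam (inv\<^bsub>M\<^esub> a \<otimes>\<^bsub>M\<^esub> a) d" using ac Dc[OF d] by (simp add: lam_comp)
    also have "\<dots> = d" using ac Dc[OF d] carrM by (simp add: one_eq lam_one)
    finally show ?thesis .
  qed
  thus "inv\<^bsub>M\<^esub> a \<in> K" using ac by (simp add: K_def)
next
  fix a b assume a: "a \<in> K" and b: "b \<in> K"
  have ac: "a \<in> carrier G" using a by (simp add: K_def)
  have bc: "b \<in> carrier G" using b by (simp add: K_def)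
  have "lam (a \<otimes>\<^bsub>M\<^esub> b) d = d" if d: "d \<in> D" for d
    using a b d ac bc Dc[OF d] by (simp add: lam_comp[symmetric] K_def)
  thus "a \<otimes>\<^bsub>M\<^esub> b \<in> K" using ac bc by (simp add: K_def)
qed

lemma derived_K: "derived M (carrier M) \<subseteq> K"
  unfolding derived_def
proof (rule M.generate_subgroup_incl[OF _ K_sub])
  show "derived_set M (carrier M) \<subseteq> K"
  proof (clarify)
    fix h1 h2 assume h1: "h1 \<in> carrier M" and h2: "h2 \<in> carrier M"
    have h1c: "h1 \<in> carrier G" and h2c: "h2 \<in> carrier G" using h1 h2 carrM by auto
    define i1 where "i1 = inv\<^bsub>M\<^esub> h1"
    define i2 where "i2 = inv\<^bsub>M\<^esub> h2"
    have i1c: "i1 \<in> carrier G" and i2c: "i2 \<in> carrier G" using h1c h2c by (simp_all add: i1_def i2_def)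
    have "lam (h1 \<otimes>\<^bsub>M\<^esub> h2 \<otimes>\<^bsub>M\<^esub> i1 \<otimes>\<^bsub>M\<^esub> i2) d = d" if d: "d \<in> D" for d
    proof -
      have dc: "d \<in> carrier G" using Dc[OF d] .
      define e where "e = lam i2 d"
      have eD: "e \<in> D" using lam_D[OF char i2c d] by (simp add: e_def)
      have ec: "e \<in> carrier G" using Dc[OF eD] .
      have "lam (h1 \<otimes>\<^bsub>M\<^esub> h2 \<otimes>\<^bsub>M\<^esub> i1 \<otimes>\<^bsub>M\<^esub> i2) d = lam h1 (lam h2 (lam i1 e))"
        using h1c h2c i1c i2c dc carrM by (simp add: lam_comp e_def M.m_assoc)
      also have "\<dots> = lam h1 (lam i1 (lam h2 e))"
        using lam_commD[OF h2c i1c eD] by simp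
      also have "\<dots> = lam (h1 \<otimes>\<^bsub>M\<^esub> i1) (lam h2 e)"
        using h1c i1c h2c ec carrM by (simp add: lam_comp M.m_assoc)
      also have "\<dots> = lam h2 e"
        using h1c h2c ec carrM by (simp add: i1_def one_eq lam_one)
      also have "\<dots> = lam (h2 \<otimes>\<^bsub>M\<^esub> i2) d"
        using h2c i2c dc by (simp add: lam_comp e_def)
      also have "\<dots> = d"
        using h2c dc carrM by (simp add: i2_def one_eq lam_one)
      finally show ?thesis .
    qed
    thus "h1 \<otimes>\<^bsub>M\<^esub> h2 \<otimes>\<^bsub>M\<^esub> inv\<^bsub>M\<^esub> h1 \<otimes>\<^bsub>M\<^esub> inv\<^bsub>M\<^esub> h2 \<in> K"
      using h1c h2c i1c i2c by (simp add: K_def i1_def i2_def)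
  qed
qed

lemma key: assumes a: "a \<in> K" and b: "b \<in> carrier G"
  shows "inv\<^bsub>G\<^esub> b \<otimes>\<^bsub>G\<^esub> lam a b \<in> centralizer G D"
proof (rule centralizerI)
  have ac: "a \<in> carrier G" using a by (simp add: K_def)
  show "inv\<^bsub>G\<^esub> b \<otimes>\<^bsub>G\<^esub> lam a b \<in> carrier G" using ac b by simp
  fix d assume d: "d \<in> D"
  have dc: "d \<in> carrier G" using Dc[OF d] .
  define L where "L = lam a b"
  have Lc: "L \<in> carrier G" using ac b by (simp add: L_def)
  define d1 where "d1 = b \<otimes>\<^bsub>G\<^esub> d \<otimes>\<^bsub>G\<^esub> inv\<^bsub>G\<^esub> b"
  have d1D: "d1 \<in> D" using G.char_conj[OF char b d] by (simp add: d1_def)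
  have d1c: "d1 \<in> carrier G" using Dc[OF d1D] .
  have bd: "b \<otimes>\<^bsub>G\<^esub> d = d1 \<otimes>\<^bsub>G\<^esub> b" using b dc by (simp add: d1_def G.m_assoc)
  have "L \<otimes>\<^bsub>G\<^esub> d = lam a (b \<otimes>\<^bsub>G\<^esub> d)" using a ac b dc d by (simp add: L_def lam_mult K_def)
  also have "\<dots> = lam a (d1 \<otimes>\<^bsub>G\<^esub> b)" by (simp add: bd)
  also have "\<dots> = d1 \<otimes>\<^bsub>G\<^esub> L" using a ac b d1c d1D by (simp add: L_def lam_mult K_def)
  finally have Ld: "L \<otimes>\<^bsub>G\<^esub> d = d1 \<otimes>\<^bsub>G\<^esub> L" .
  have "inv\<^bsub>G\<^esub> b \<otimes>\<^bsub>G\<^esub> L \<otimes>\<^bsub>G\<^esub> d = inv\<^bsub>G\<^esub> b \<otimes>\<^bsub>G\<^esub> (d1 \<otimes>\<^bsub>G\<^esub> L)"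
    using b Lc dc by (simp add: G.m_assoc Ld)
  also have "\<dots> = d \<otimes>\<^bsub>G\<^esub> (inv\<^bsub>G\<^esub> b \<otimes>\<^bsub>G\<^esub> L)"
    using b Lc dc by (simp add: d1_def G.m_assoc)
  finally show "inv\<^bsub>G\<^esub> b \<otimes>\<^bsub>G\<^esub> lam a b \<otimes>\<^bsub>G\<^esub> d = d \<otimes>\<^bsub>G\<^esub> (inv\<^bsub>G\<^esub> b \<otimes>\<^bsub>G\<^esub> lam a b)"
    by (simp add: L_def)
qed

lemma coset_step: assumes x: "x \<in> carrier G" and c: "c \<in> centralizer G D"
  shows "centralizer G D #>\<^bsub>G\<^esub> x = centralizer G D #>\<^bsub>G\<^esub> (x \<otimes>\<^bsub>G\<^esub> c)"
proof -
  have N: "centralizer G D \<lhd> G" by (rule G.centralizer_normal[OF char])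
  have "x \<otimes>\<^bsub>G\<^esub> c \<in> x <#\<^bsub>G\<^esub> centralizer G D" using c by (auto simp: l_coset_def)
  also have "\<dots> = centralizer G D #>\<^bsub>G\<^esub> x" using normal.coset_eq[OF N] x by simp
  finally show ?thesis using G.repr_independence x normal_imp_subgroup[OF N] by blast
qed

end


theorem proposition4p4:
  fixes G :: "('a, 'b) monoid_scheme" and M :: "('a, 'c) monoid_scheme" and D :: "'a set"
  assumes "skew_brace G M"
    and "characteristic_subgroup D G"
    and "cyclic_group (subgroup_generated G D)"
  shows "\<exists>m::nat. m > 0 \<and>
     (\<forall>a \<in> derived_term M m. \<forall>b \<in> derived_term M m.
        centralizer G D #>\<^bsub>G\<^esub> (a \<otimes>\<^bsub>M\<^esub> b) = centralizer G D #>\<^bsub>G\<^esub> (a \<otimes>\<^bsub>G\<^esub> b)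
      \<and> centralizer G D #>\<^bsub>G\<^esub> (inv\<^bsub>M\<^esub> a) = centralizer G D #>\<^bsub>G\<^esub> (inv\<^bsub>G\<^esub> a))"
proof -
  have gG: "group G" and gM: "group M" and cM: "carrier M = carrier G"
    using assms(1) by (auto simp: skew_brace_def)
  interpret sbrD G M D
    apply (intro sbrD.intro sbr.intro sbrD_axioms.intro sbr_axioms.intro gG gM cM assms(2,3))
    using assms(1) by (auto simp: skew_brace_def)
  have dt: "derived_term M 2 = derived M (carrier M)" by (simp add: derived_term_def)
  have dK: "derived_term M 2 \<subseteq> K" using derived_K dt by simp
  have dC: "derived_term M 2 \<subseteq> carrier G" using dt M.derived_in_carrier[of "carrier M"] cM by simp
  have "(\<forall>a \<in> derived_term M 2. \<forall>b \<in> derived_term M 2.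
        centralizer G D #>\<^bsub>G\<^esub> (a \<otimes>\<^bsub>M\<^esub> b) = centralizer G D #>\<^bsub>G\<^esub> (a \<otimes>\<^bsub>G\<^esub> b)
      \<and> centralizer G D #>\<^bsub>G\<^esub> (inv\<^bsub>M\<^esub> a) = centralizer G D #>\<^bsub>G\<^esub> (inv\<^bsub>G\<^esub> a))"
  proof (intro ballI conjI)
    fix a b assume a: "a \<in> derived_term M 2" and b: "b \<in> derived_term M 2"
    have aK: "a \<in> K" using a dK by blast
    have ac: "a \<in> carrier G" using a dC by blast
    have bc: "b \<in> carrier G" using b dC by blast
    have "a \<otimes>\<^bsub>M\<^esub> b = (a \<otimes>\<^bsub>G\<^esub> b) \<otimes>\<^bsub>G\<^esub> (inv\<^bsub>G\<^esub> b \<otimes>\<^bsub>G\<^esub> lam a b)"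
      using ac bc by (simp add: mult_decomp G.m_assoc)
    thus "centralizer G D #>\<^bsub>G\<^esub> (a \<otimes>\<^bsub>M\<^esub> b) = centralizer G D #>\<^bsub>G\<^esub> (a \<otimes>\<^bsub>G\<^esub> b)"
      using coset_step[of "a \<otimes>\<^bsub>G\<^esub> b", OF _ key[OF aK bc]] ac bc by simp
    have ic: "inv\<^bsub>M\<^esub> a \<in> carrier G" using ac by simp
    have la: "lam a (inv\<^bsub>M\<^esub> a) = inv\<^bsub>G\<^esub> a" using ac cM by (simp add: lam_def one_eq)
    have "inv\<^bsub>M\<^esub> a \<otimes>\<^bsub>G\<^esub> (inv\<^bsub>G\<^esub> (inv\<^bsub>M\<^esub> a) \<otimes>\<^bsub>G\<^esub> lam a (inv\<^bsub>M\<^esub> a)) = inv\<^bsub>G\<^esub> a"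
      using ic ac by (simp add: la)
    thus "centralizer G D #>\<^bsub>G\<^esub> (inv\<^bsub>M\<^esub> a) = centralizer G D #>\<^bsub>G\<^esub> (inv\<^bsub>G\<^esub> a)"
      using coset_step[OF ic key[OF aK ic]] by simp
  qed
  thus ?thesis by (intro exI[of _ 2]) simp
qed

end
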